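(* Let $m\le n$ be positive integers, $A$ a Hermitian $n\times n$ matrix, and $v_1,\dots,v_m\in\mathbb C^n$ orthonormal vectors satisfying $(A-\lambda_jI)v_j=r_j$ for real scalars $\lambda_j$ and vectors $r_j\in\mathbb C^n$, $1\le j\le m$. Then there are $m$ eigenvalues $\alpha_1,\dots,\alpha_m$ of $A$ (counted with multiplicity), in one-to-one correspondence with the $\lambda_j$, such that $|\lambda_j-\alpha_j|\le2m\sup_{1\le i\le m}\|r_i\|_2$ for all $1\le j\le m$. *)

theory Defs
  imports "Jordan_Normal_Form.Char_Poly"
begin

definition cinner :: "complex vec \<Rightarrow> complex vec \<Rightarrow> complex" where
  "cinner v w = (\<Sum>i<dim_vec v. v $ i * cnj (w $ i))"

definition norm2 :: "complex vec \<Rightarrow> real" where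
  "norm2 v = sqrt (\<Sum>i<dim_vec v. (cmod (v $ i))^2)"

definition hermitian_mat :: "complex mat \<Rightarrow> bool" where
  "hermitian_mat A \<longleftrightarrow> dim_row A = dim_col A \<and>
     (\<forall>i<dim_row A. \<forall>j<dim_col A. A $$ (i,j) = cnj (A $$ (j,i)))"

end

theory Submission
  imports Defs "Jordan_Normal_Form.Schur_Decomposition"
begin

lemma hall:
  fixes N :: "'a \<Rightarrow> 'b set" and I :: "'a set"
  assumes "finite I" "\<forall>i\<in>I. finite (N i)" "\<forall>S\<subseteq>I. card S \<le> card (\<Union>(N ` S))"
  shows "\<exists>\<sigma>. inj_on \<sigma> I \<and> (\<forall>i\<in>I. \<sigma> i \<in> N i)"
  using assms
proof (induction "card I" arbitrary: I N rule: less_induct)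
  case less
  note fin = less.prems(1) and finN = less.prems(2) and H = less.prems(3)
  have finU: "\<And>S. S \<subseteq> I \<Longrightarrow> finite (\<Union>(N ` S))"
    using fin finN by (meson finite_UN_I finite_subset subsetD)
  show ?case
  proof (cases "\<exists>S0. S0 \<subseteq> I \<and> S0 \<noteq> {} \<and> S0 \<noteq> I \<and> card (\<Union>(N ` S0)) \<le> card S0")
    case True
    then obtain S0 where S0: "S0 \<subseteq> I" "S0 \<noteq> {}" "S0 \<noteq> I" "card (\<Union>(N ` S0)) \<le> card S0" by blast
    have finS0: "finite S0" using S0 fin finite_subset by blast
    have c1: "card S0 < card I" using S0 fin by (meson psubsetI psubset_card_mono)
    obtain \<sigma>1 where s1: "inj_on \<sigma>1 S0" "\<forall>i\<in>S0. \<sigma>1 i \<in> N i"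
    proof -
      have a: "\<forall>i\<in>S0. finite (N i)" using finN S0 by auto
      have b: "\<forall>S\<subseteq>S0. card S \<le> card (\<Union>(N ` S))" using H S0 by auto
      from less.hyps[of S0 N, OF c1 finS0 a b] show ?thesis using that by blast
    qed
    define U where "U = \<Union>(N ` S0)"
    have finUU: "finite U" using finU S0 U_def by blast
    have cU: "card U = card S0" using S0 H U_def by (simp add: le_antisym)
    define N2 where "N2 = (\<lambda>i. N i - U)"
    have c2: "card (I - S0) < card I" using S0 fin
      by (metis Diff_subset card_Diff_subset card_gt_0_iff diff_less finite_subset subset_empty)
    have H2: "\<forall>S\<subseteq>I - S0. card S \<le> card (\<Union>(N2 ` S))"
    proof (intro allI impI)
      fix S assume S: "S \<subseteq> I - S0"
      have finS: "finite S" using S fin finite_subset by blast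
      have e: "\<Union>(N ` (S \<union> S0)) = \<Union>(N2 ` S) \<union> U" unfolding N2_def U_def by auto
      have d: "\<Union>(N2 ` S) \<inter> U = {}" unfolding N2_def by auto
      have f2: "finite (\<Union>(N2 ` S))" using finU[of S] S unfolding N2_def by auto
      have "card (\<Union>(N ` (S \<union> S0))) = card (\<Union>(N2 ` S)) + card U"
        unfolding e using card_Un_disjoint[OF f2 finUU d] .
      moreover have "card (S \<union> S0) = card S + card S0"
        using card_Un_disjoint[OF finS finS0] S by blast
      moreover have "card (S \<union> S0) \<le> card (\<Union>(N ` (S \<union> S0)))"
        using H S S0 by (meson Diff_subset Un_least order_trans)
      ultimately show "card S \<le> card (\<Union>(N2 ` S))" using cU by linarith
    qed
    have a2: "\<forall>i\<in>I - S0. finite (N2 i)" using finN unfolding N2_def by auto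
    obtain \<sigma>2 where s2: "inj_on \<sigma>2 (I - S0)" "\<forall>i\<in>I - S0. \<sigma>2 i \<in> N2 i"
      using less.hyps[of "I - S0" N2, OF c2 _ a2 H2] fin by blast
    define \<sigma> where "\<sigma> = (\<lambda>i. if i \<in> S0 then \<sigma>1 i else \<sigma>2 i)"
    have "inj_on \<sigma> I"
    proof (rule inj_onI)
      fix i j assume ij: "i \<in> I" "j \<in> I" "\<sigma> i = \<sigma> j"
      show "i = j"
      proof (cases "i \<in> S0"; cases "j \<in> S0")
        assume "i \<in> S0" "j \<in> S0" thus ?thesis using ij s1 unfolding \<sigma>_def inj_on_def by auto
      next
        assume a: "i \<in> S0" "j \<notin> S0"
        hence "\<sigma> i \<in> U" using s1 unfolding \<sigma>_def U_def by auto
        moreover have "\<sigma> j \<notin> U" using a s2 ij(1,2) unfolding \<sigma>_def N2_def by auto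
        ultimately show ?thesis using ij by auto
      next
        assume a: "i \<notin> S0" "j \<in> S0"
        hence "\<sigma> j \<in> U" using s1 unfolding \<sigma>_def U_def by auto
        moreover have "\<sigma> i \<notin> U" using a s2 ij(1,2) unfolding \<sigma>_def N2_def by auto
        ultimately show ?thesis using ij by auto
      next
        assume "i \<notin> S0" "j \<notin> S0" thus ?thesis using ij s2 unfolding \<sigma>_def inj_on_def by auto
      qed
    qed
    moreover have "\<forall>i\<in>I. \<sigma> i \<in> N i" using s1 s2 unfolding \<sigma>_def N2_def by auto
    ultimately show ?thesis by blast
  next
    case False
    hence strict: "\<And>S. S \<subseteq> I \<Longrightarrow> S \<noteq> {} \<Longrightarrow> S \<noteq> I \<Longrightarrow> card S < card (\<Union>(N ` S))"
      by (meson not_le)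
    show ?thesis
    proof (cases "I = {}")
      case True thus ?thesis by auto
    next
      case False
      then obtain i0 where i0: "i0 \<in> I" by blast
      have "card {i0} \<le> card (N i0)" using H[rule_format, of "{i0}"] i0 by auto
      hence "N i0 \<noteq> {}" by auto
      then obtain y where y: "y \<in> N i0" by blast
      define N2 where "N2 = (\<lambda>i. N i - {y})"
      have c2: "card (I - {i0}) < card I" using i0 fin by (meson card_Diff1_less)
      have H2: "\<forall>S\<subseteq>I - {i0}. card S \<le> card (\<Union>(N2 ` S))"
      proof (intro allI impI)
        fix S assume S: "S \<subseteq> I - {i0}"
        show "card S \<le> card (\<Union>(N2 ` S))"
        proof (cases "S = {}")
          case True thus ?thesis by simp
        next
          case False
          have "card S < card (\<Union>(N ` S))" using strict[of S] S False i0 by auto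
          moreover have "\<Union>(N2 ` S) = \<Union>(N ` S) - {y}" unfolding N2_def by auto
          moreover have "card (\<Union>(N ` S) - {y}) \<ge> card (\<Union>(N ` S)) - 1"
            using diff_card_le_card_Diff[of "{y}" "\<Union>(N ` S)"] finU[of S] S by auto
          ultimately show ?thesis by simp
        qed
      qed
      have a2: "\<forall>i\<in>I - {i0}. finite (N2 i)" using finN unfolding N2_def by auto
      obtain \<sigma>2 where s2: "inj_on \<sigma>2 (I - {i0})" "\<forall>i\<in>I - {i0}. \<sigma>2 i \<in> N2 i"
        using less.hyps[of "I - {i0}" N2, OF c2 _ a2 H2] fin by blast
      define \<sigma> where "\<sigma> = \<sigma>2(i0 := y)"
      have "inj_on \<sigma> I"
      proof (rule inj_onI)
        fix i j assume ij: "i \<in> I" "j \<in> I" "\<sigma> i = \<sigma> j"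
        have nz: "\<And>k. k \<in> I - {i0} \<Longrightarrow> \<sigma>2 k \<noteq> y" using s2(2) unfolding N2_def by blast
        show "i = j"
        proof (cases "i = i0"; cases "j = i0")
          assume "i \<noteq> i0" "j \<noteq> i0"
          thus ?thesis using ij s2(1) unfolding \<sigma>_def inj_on_def by auto
        qed (use ij nz in \<open>auto simp: \<sigma>_def\<close>)
      qed
      moreover have "\<forall>i\<in>I. \<sigma> i \<in> N i" using s2 y unfolding \<sigma>_def N2_def by auto
      ultimately show ?thesis by blast
    qed
  qed
qed

lemma homog_nontrivial:
  fixes f :: "'a \<Rightarrow> 'b \<Rightarrow> 'c :: field"
  assumes "finite T" "finite S" "card T < card S"
  shows "\<exists>x. (\<exists>j\<in>S. x j \<noteq> 0) \<and> (\<forall>k\<in>T. (\<Sum>j\<in>S. x j * f j k) = 0)"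
  using assms
proof (induction T arbitrary: S f rule: finite_induct)
  case empty
  then obtain j where "j \<in> S" by (metis card.empty card_gt_0_iff equals0I)
  thus ?case by (rule_tac x="\<lambda>_. 1" in exI) auto
next
  case (insert t T)
  note finS = insert.prems(1)
  have cT: "card T + 1 < card S" using insert by simp
  show ?case
  proof (cases "\<forall>j\<in>S. f j t = 0")
    case True
    obtain x where x: "\<exists>j\<in>S. x j \<noteq> 0" "\<forall>k\<in>T. (\<Sum>j\<in>S. x j * f j k) = 0"
      using insert.IH[OF finS, of f] cT by auto
    thus ?thesis using True by (rule_tac x=x in exI) auto
  next
    case False
    then obtain j0 where j0: "j0 \<in> S" "f j0 t \<noteq> 0" by blast
    define S' where "S' = S - {j0}"
    have finS': "finite S'" using finS S'_def by auto
    have cS': "card T < card S'" using cT j0 finS unfolding S'_def by auto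
    define g where "g = (\<lambda>j k. f j k - f j t / f j0 t * f j0 k)"
    obtain y where y: "\<exists>j\<in>S'. y j \<noteq> 0" "\<forall>k\<in>T. (\<Sum>j\<in>S'. y j * g j k) = 0"
      using insert.IH[OF finS' cS', of g] by auto
    define c where "c = - (\<Sum>j\<in>S'. y j * f j t) / f j0 t"
    define x where "x = y(j0 := c)"
    have sx: "\<And>k. (\<Sum>j\<in>S. x j * f j k) = c * f j0 k + (\<Sum>j\<in>S'. y j * f j k)"
    proof -
      fix k
      have "(\<Sum>j\<in>S. x j * f j k) = x j0 * f j0 k + (\<Sum>j\<in>S'. x j * f j k)"
        unfolding S'_def using sum.remove[OF finS j0(1)] by blast
      also have "(\<Sum>j\<in>S'. x j * f j k) = (\<Sum>j\<in>S'. y j * f j k)"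
        by (rule sum.cong) (auto simp: x_def S'_def)
      finally show "?thesis k" by (simp add: x_def)
    qed
    have "\<forall>k\<in>insert t T. (\<Sum>j\<in>S. x j * f j k) = 0"
    proof
      fix k assume k: "k \<in> insert t T"
      show "(\<Sum>j\<in>S. x j * f j k) = 0"
      proof (cases "k = t")
        case True thus ?thesis unfolding sx c_def using j0 by simp
      next
        case False
        hence kT: "k \<in> T" using k by auto
        have "(\<Sum>j\<in>S'. y j * g j k) = (\<Sum>j\<in>S'. y j * f j k) - (\<Sum>j\<in>S'. y j * f j t) / f j0 t * f j0 k"
          unfolding g_def by (simp add: right_diff_distrib sum_subtractf sum_distrib_right sum_divide_distrib mult.assoc)
        thus ?thesis unfolding sx c_def using y(2) kT by (simp add: algebra_simps)
      qed
    qed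
    moreover have "\<exists>j\<in>S. x j \<noteq> 0" using y(1) unfolding x_def S'_def by auto
    ultimately show ?thesis by blast
  qed
qed

lemma sum_sq_le_card_sum_sq:
  fixes a :: "'a \<Rightarrow> real"
  assumes "finite I"
  shows "(\<Sum>i\<in>I. a i)\<^sup>2 \<le> real (card I) * (\<Sum>i\<in>I. (a i)\<^sup>2)"
proof -
  have "(\<Sum>i\<in>I. a i)\<^sup>2 = (\<Sum>i\<in>I. \<Sum>j\<in>I. a i * a j)"
    by (simp add: power2_eq_square sum_product)
  also have "\<dots> \<le> (\<Sum>i\<in>I. \<Sum>j\<in>I. ((a i)\<^sup>2 + (a j)\<^sup>2) / 2)"
  proof (intro sum_mono)
    fix i j
    have "0 \<le> (a i - a j)\<^sup>2" by simp
    thus "a i * a j \<le> ((a i)\<^sup>2 + (a j)\<^sup>2) / 2" by (simp add: power2_eq_square algebra_simps)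
  qed
  also have "\<dots> = (\<Sum>i\<in>I. \<Sum>j\<in>I. (a i)\<^sup>2 / 2) + (\<Sum>i\<in>I. \<Sum>j\<in>I. (a j)\<^sup>2 / 2)"
    by (simp add: add_divide_distrib sum.distrib)
  also have "(\<Sum>i\<in>I. \<Sum>j\<in>I. (a j)\<^sup>2 / 2) = (\<Sum>i\<in>I. \<Sum>j\<in>I. (a i)\<^sup>2 / 2)"
    by (rule sum.swap)
  also have "(\<Sum>i\<in>I. \<Sum>j\<in>I. (a i)\<^sup>2 / 2) = real (card I) * (\<Sum>i\<in>I. (a i)\<^sup>2) / 2"
    by (simp add: sum_distrib_left sum_divide_distrib mult.commute)
  finally show ?thesis by simp
qed

lemma tail_bound:
  fixes c :: "nat \<Rightarrow> complex" and \<alpha> :: "nat \<Rightarrow> complex" and l :: complex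
  assumes m0: "0 < m" and e0: "0 \<le> \<epsilon>"
    and res: "(\<Sum>k<n. (cmod (\<alpha> k - l))\<^sup>2 * (cmod (c k))\<^sup>2) \<le> \<epsilon>\<^sup>2"
    and K: "K \<subseteq> {..<n}" "\<forall>k\<in>K. cmod (l - \<alpha> k) > 2 * real m * \<epsilon>"
  shows "(\<Sum>k\<in>K. (cmod (c k))\<^sup>2) \<le> 1 / (2 * real m)\<^sup>2"
proof (cases "\<epsilon> = 0")
  case True
  have "(\<Sum>k<n. (cmod (\<alpha> k - l))\<^sup>2 * (cmod (c k))\<^sup>2) = 0"
    using res True by (simp add: antisym sum_nonneg)
  hence z: "\<forall>k\<in>{..<n}. (cmod (\<alpha> k - l))\<^sup>2 * (cmod (c k))\<^sup>2 = 0"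
    by (subst (asm) sum_nonneg_eq_0_iff) auto
  have "\<forall>k\<in>K. (cmod (c k))\<^sup>2 = 0"
  proof
    fix k assume k: "k \<in> K"
    hence "cmod (\<alpha> k - l) > 0" using K True by (simp add: norm_minus_commute)
    thus "(cmod (c k))\<^sup>2 = 0" using z k K by auto
  qed
  thus ?thesis by simp
next
  case False
  hence ep: "\<epsilon> > 0" using e0 by simp
  define \<delta> where "\<delta> = 2 * real m * \<epsilon>"
  have dp: "\<delta> > 0" using ep m0 by (simp add: \<delta>_def)
  have "(\<Sum>k\<in>K. \<delta>\<^sup>2 * (cmod (c k))\<^sup>2) \<le> (\<Sum>k\<in>K. (cmod (\<alpha> k - l))\<^sup>2 * (cmod (c k))\<^sup>2)"
  proof (rule sum_mono)
    fix k assume "k \<in> K"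
    hence "\<delta> < cmod (\<alpha> k - l)" using K by (simp add: norm_minus_commute \<delta>_def)
    hence "\<delta>\<^sup>2 \<le> (cmod (\<alpha> k - l))\<^sup>2" using dp by (simp add: power_mono)
    thus "\<delta>\<^sup>2 * (cmod (c k))\<^sup>2 \<le> (cmod (\<alpha> k - l))\<^sup>2 * (cmod (c k))\<^sup>2"
      by (simp add: mult_right_mono)
  qed
  also have "\<dots> \<le> (\<Sum>k<n. (cmod (\<alpha> k - l))\<^sup>2 * (cmod (c k))\<^sup>2)"
    by (rule sum_mono2) (use K in auto)
  also have "\<dots> \<le> \<epsilon>\<^sup>2" by (rule res)
  finally have "\<delta>\<^sup>2 * (\<Sum>k\<in>K. (cmod (c k))\<^sup>2) \<le> \<epsilon>\<^sup>2" by (simp add: sum_distrib_left)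
  hence "(\<Sum>k\<in>K. (cmod (c k))\<^sup>2) \<le> \<epsilon>\<^sup>2 / \<delta>\<^sup>2" using dp
    by (simp add: le_divide_eq mult.commute)
  also have "\<epsilon>\<^sup>2 / \<delta>\<^sup>2 = 1 / (2 * real m)\<^sup>2" using ep m0 unfolding \<delta>_def
    by (simp add: power_mult_distrib)
  finally show ?thesis .
qed

lemma norm_sq_sum_orth:
  fixes c :: "nat \<Rightarrow> nat \<Rightarrow> complex" and x :: "nat \<Rightarrow> complex"
  assumes S: "S \<subseteq> {..<m}"
    and orth: "\<And>i j. i<m \<Longrightarrow> j<m \<Longrightarrow> (\<Sum>k<n. c i k * cnj (c j k)) = (if i = j then 1 else 0)"
  shows "(\<Sum>k<n. (cmod (\<Sum>j\<in>S. x j * c j k))\<^sup>2) = (\<Sum>j\<in>S. (cmod (x j))\<^sup>2)"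
proof -
  have finS: "finite S" using S finite_subset by blast
  have "complex_of_real (\<Sum>k<n. (cmod (\<Sum>j\<in>S. x j * c j k))\<^sup>2)
      = (\<Sum>k<n. (\<Sum>i\<in>S. x i * c i k) * cnj (\<Sum>j\<in>S. x j * c j k))"
    unfolding of_real_sum complex_norm_square ..
  also have "\<dots> = (\<Sum>k<n. \<Sum>i\<in>S. \<Sum>j\<in>S. x i * cnj (x j) * (c i k * cnj (c j k)))"
    apply (simp add: sum_distrib_left sum_distrib_right mult_ac)
    apply (rule sum.cong[OF refl])
    apply (rule sum.swap)
    done
  also have "\<dots> = (\<Sum>i\<in>S. \<Sum>j\<in>S. x i * cnj (x j) * (\<Sum>k<n. c i k * cnj (c j k)))"
    by (simp add: sum_distrib_left sum.swap[of _ "{..<n}"])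
  also have "\<dots> = (\<Sum>i\<in>S. \<Sum>j\<in>S. x i * cnj (x j) * (if i = j then 1 else 0))"
    by (intro sum.cong refl, subst orth) (use S in auto)
  also have "\<dots> = (\<Sum>i\<in>S. x i * cnj (x i))"
    by (simp add: finS if_distrib sum.delta cong: if_cong)
  also have "\<dots> = complex_of_real (\<Sum>j\<in>S. (cmod (x j))\<^sup>2)"
    unfolding of_real_sum complex_norm_square ..
  finally show ?thesis by (simp only: of_real_eq_iff)
qed

lemma approx_match:
  fixes c :: "nat \<Rightarrow> nat \<Rightarrow> complex" and \<alpha> lam :: "nat \<Rightarrow> complex" and \<epsilon> :: real
  assumes m0: "0 < m" and e0: "0 \<le> \<epsilon>"
    and orth: "\<And>i j. i<m \<Longrightarrow> j<m \<Longrightarrow> (\<Sum>k<n. c i k * cnj (c j k)) = (if i = j then 1 else 0)"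
    and res: "\<And>j. j<m \<Longrightarrow> (\<Sum>k<n. (cmod (\<alpha> k - lam j))\<^sup>2 * (cmod (c j k))\<^sup>2) \<le> \<epsilon>\<^sup>2"
  shows "\<exists>\<sigma>. inj_on \<sigma> {..<m} \<and> \<sigma> ` {..<m} \<subseteq> {..<n} \<and>
           (\<forall>j<m. cmod (lam j - \<alpha> (\<sigma> j)) \<le> 2 * real m * \<epsilon>)"
proof -
  define \<delta> where "\<delta> = 2 * real m * \<epsilon>"
  define N where "N = (\<lambda>j. {k. k < n \<and> cmod (lam j - \<alpha> k) \<le> \<delta>})"
  have NH: "\<forall>S\<subseteq>{..<m}. card S \<le> card (\<Union>(N ` S))"
  proof (intro allI impI, rule ccontr)
    fix S assume S: "S \<subseteq> {..<m}" and "\<not> card S \<le> card (\<Union>(N ` S))"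
    hence lt: "card (\<Union>(N ` S)) < card S" by simp
    define T where "T = \<Union>(N ` S)"
    have Tn: "T \<subseteq> {..<n}" unfolding T_def N_def by auto
    have finT: "finite T" using Tn finite_subset by blast
    have finS: "finite S" using S finite_subset by blast
    obtain x where x: "\<exists>j\<in>S. x j \<noteq> 0" "\<forall>k\<in>T. (\<Sum>j\<in>S. x j * c j k) = 0"
      using homog_nontrivial[OF finT finS lt[folded T_def], of c] by blast
    define w where "w = (\<lambda>k. \<Sum>j\<in>S. x j * c j k)"
    define M where "M = Max ((\<lambda>j. cmod (x j)) ` S)"
    have Sne: "S \<noteq> {}" using x by auto
    have Mge: "\<And>j. j \<in> S \<Longrightarrow> cmod (x j) \<le> M" unfolding M_def using finS by auto
    have "M \<in> (\<lambda>j. cmod (x j)) ` S" unfolding M_def using finS Sne by (intro Max_in) auto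
    then obtain js where js: "js \<in> S" "cmod (x js) = M" by auto
    have M0: "M > 0"
    proof -
      obtain j where "j \<in> S" "x j \<noteq> 0" using x by blast
      thus ?thesis using Mge[of j] by (meson less_le_trans zero_less_norm_iff)
    qed
    have "M\<^sup>2 \<le> (\<Sum>j\<in>S. (cmod (x j))\<^sup>2)"
      using member_le_sum[of js S "\<lambda>j. (cmod (x j))\<^sup>2"] js finS by auto
    also have "\<dots> = (\<Sum>k<n. (cmod (w k))\<^sup>2)"
      unfolding w_def using norm_sq_sum_orth[OF S orth] by simp
    also have "\<dots> = (\<Sum>k\<in>{..<n} - T. (cmod (w k))\<^sup>2)"
      by (rule sum.mono_neutral_right) (use x(2) in \<open>auto simp: w_def\<close>)
    also have "\<dots> \<le> (\<Sum>k\<in>{..<n} - T. real (card S) * (\<Sum>j\<in>S. M\<^sup>2 * (cmod (c j k))\<^sup>2))"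
    proof (rule sum_mono)
      fix k
      have "cmod (w k) \<le> (\<Sum>j\<in>S. cmod (x j * c j k))" unfolding w_def by (rule norm_sum)
      also have "\<dots> \<le> (\<Sum>j\<in>S. M * cmod (c j k))"
        by (rule sum_mono) (simp add: norm_mult Mge mult_right_mono)
      finally have "(cmod (w k))\<^sup>2 \<le> (\<Sum>j\<in>S. M * cmod (c j k))\<^sup>2"
        by (simp add: power_mono)
      also have "\<dots> \<le> real (card S) * (\<Sum>j\<in>S. (M * cmod (c j k))\<^sup>2)"
        by (rule sum_sq_le_card_sum_sq[OF finS])
      finally show "(cmod (w k))\<^sup>2 \<le> real (card S) * (\<Sum>j\<in>S. M\<^sup>2 * (cmod (c j k))\<^sup>2)"
        by (simp add: power_mult_distrib)
    qed
    also have "\<dots> = real (card S) * M\<^sup>2 * (\<Sum>j\<in>S. \<Sum>k\<in>{..<n} - T. (cmod (c j k))\<^sup>2)"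
      by (simp add: sum_distrib_left sum.swap[of _ "{..<n} - T"] mult.assoc)
    also have "\<dots> \<le> real (card S) * M\<^sup>2 * (\<Sum>j\<in>S. 1 / (2 * real m)\<^sup>2)"
    proof (intro mult_left_mono sum_mono)
      fix j assume j: "j \<in> S"
      show "(\<Sum>k\<in>{..<n} - T. (cmod (c j k))\<^sup>2) \<le> 1 / (2 * real m)\<^sup>2"
      proof (rule tail_bound[OF m0 e0 res])
        show "j < m" using j S by auto
        show "{..<n} - T \<subseteq> {..<n}" by auto
        show "\<forall>k\<in>{..<n} - T. 2 * real m * \<epsilon> < cmod (lam j - \<alpha> k)"
          using j unfolding T_def N_def \<delta>_def by force
      qed
    qed simp
    also have "\<dots> = M\<^sup>2 * ((real (card S))\<^sup>2 / (2 * real m)\<^sup>2)"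
      by (simp add: power2_eq_square)
    also have "\<dots> \<le> M\<^sup>2 * (1/4)"
    proof (rule mult_left_mono)
      have cS: "real (card S) \<le> real m" using card_mono[OF _ S] by auto
      hence "(real (card S))\<^sup>2 \<le> (real m)\<^sup>2" by (simp add: power_mono)
      thus "(real (card S))\<^sup>2 / (2 * real m)\<^sup>2 \<le> 1/4" using m0
        by (simp add: power_mult_distrib divide_le_eq)
    qed simp
    finally have "M\<^sup>2 \<le> M\<^sup>2 * (1/4)" .
    thus False using M0 by (simp add: power2_eq_square)
  qed
  have finN: "\<forall>j\<in>{..<m}. finite (N j)" unfolding N_def by auto
  obtain \<sigma> where \<sigma>: "inj_on \<sigma> {..<m}" "\<forall>j\<in>{..<m}. \<sigma> j \<in> N j"
    using hall[OF _ finN NH] by auto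
  thus ?thesis unfolding N_def \<delta>_def by auto
qed

definition adj :: "complex mat \<Rightarrow> complex mat" where
  "adj M = mat (dim_col M) (dim_row M) (\<lambda>(i,j). cnj (M $$ (j,i)))"

lemma adj_carrier[simp]: "M \<in> carrier_mat n m \<Longrightarrow> adj M \<in> carrier_mat m n"
  unfolding adj_def by auto

lemma adj_dims[simp]: "dim_row (adj M) = dim_col M" "dim_col (adj M) = dim_row M"
  unfolding adj_def by auto

lemma adj_index[simp]: "i < dim_col M \<Longrightarrow> j < dim_row M \<Longrightarrow> adj M $$ (i,j) = cnj (M $$ (j,i))"
  unfolding adj_def by auto

lemma adj_adj[simp]: "adj (adj M) = M"
  by (rule eq_matI) auto

lemma adj_mult:
  assumes "A \<in> carrier_mat n k" "B \<in> carrier_mat k m"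
  shows "adj (A * B) = adj B * adj A"
proof (rule eq_matI)
  fix i j assume ij: "i < dim_row (adj B * adj A)" "j < dim_col (adj B * adj A)"
  hence i: "i < m" and j: "j < n" using assms by auto
  have "adj (A * B) $$ (i,j) = cnj ((A * B) $$ (j,i))" using assms i j by simp
  also have "\<dots> = cnj (\<Sum>l<k. A $$ (j,l) * B $$ (l,i))"
    using assms i j by (simp add: scalar_prod_def lessThan_atLeast0)
  also have "\<dots> = (\<Sum>l<k. cnj (B $$ (l,i)) * cnj (A $$ (j,l)))"
    by (simp add: mult.commute)
  also have "\<dots> = (adj B * adj A) $$ (i,j)"
    using assms i j by (simp add: scalar_prod_def lessThan_atLeast0)
  finally show "adj (A * B) $$ (i,j) = (adj B * adj A) $$ (i,j)" .
qed (use assms in auto)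

lemma adj_one[simp]: "adj (1\<^sub>m n) = 1\<^sub>m n"
  by (rule eq_matI) auto

lemma adj_zero[simp]: "adj (0\<^sub>m n m) = 0\<^sub>m m n"
  by (rule eq_matI) auto

lemma adj_four_block:
  assumes "A \<in> carrier_mat a a" "B \<in> carrier_mat a b" "C \<in> carrier_mat b a" "D \<in> carrier_mat b b"
  shows "adj (four_block_mat A B C D) = four_block_mat (adj A) (adj C) (adj B) (adj D)"
  by (rule eq_matI) (use assms in \<open>auto simp: four_block_mat_def\<close>)

lemma hermitian_adj: assumes "hermitian_mat A" shows "adj A = A"
proof -
  have d: "dim_row A = dim_col A" using assms unfolding hermitian_mat_def by blast
  have h: "\<forall>i<dim_row A. \<forall>j<dim_col A. A $$ (i,j) = cnj (A $$ (j,i))"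
    using assms unfolding hermitian_mat_def by blast
  show ?thesis
  proof (rule eq_matI)
    fix i j assume ij: "i < dim_row A" "j < dim_col A"
    have e: "A $$ (j,i) = cnj (A $$ (i,j))" using h ij d by metis
    show "adj A $$ (i,j) = A $$ (i,j)" using ij d by (simp add: e)
  qed (use d in simp_all)
qed

definition sqn :: "complex vec \<Rightarrow> real" where
  "sqn w = (\<Sum>i<dim_vec w. (cmod (w $ i))\<^sup>2)"

definition nrm :: "complex vec \<Rightarrow> complex vec" where
  "nrm w = complex_of_real (1 / sqrt (sqn w)) \<cdot>\<^sub>v w"

lemma cscalar_self: "w \<bullet>c w = complex_of_real (sqn w)"
proof -
  have "w \<bullet>c w = (\<Sum>i<dim_vec w. w$i * cnj (w$i))"
    unfolding scalar_prod_def by (simp add: lessThan_atLeast0)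
  also have "\<dots> = (\<Sum>i<dim_vec w. complex_of_real ((cmod (w$i))\<^sup>2))" by (simp only: complex_norm_square)
  also have "\<dots> = complex_of_real (sqn w)" unfolding sqn_def of_real_sum ..
  finally show ?thesis .
qed

lemma cscalar_smult:
  assumes "a \<in> carrier_vec n" "b \<in> carrier_vec n"
  shows "(c \<cdot>\<^sub>v a) \<bullet>c (d \<cdot>\<^sub>v b) = c * cnj d * (a \<bullet>c b)"
proof -
  have "(c \<cdot>\<^sub>v a) \<bullet>c (d \<cdot>\<^sub>v b) = (\<Sum>i\<in>{0..<n}. c * cnj d * (a$i * cnj (b$i)))"
    unfolding scalar_prod_def using assms by (intro sum.cong) auto
  also have "\<dots> = c * cnj d * (a \<bullet>c b)"
    unfolding scalar_prod_def sum_distrib_left using assms by simp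
  finally show ?thesis .
qed

lemma sqn_pos: assumes "w \<in> carrier_vec n" "w \<noteq> 0\<^sub>v n" shows "sqn w > 0"
proof -
  have "w \<bullet>c w \<noteq> 0" using assms by simp
  hence "sqn w \<noteq> 0" using cscalar_self[of w] by auto
  moreover have "sqn w \<ge> 0" unfolding sqn_def by (simp add: sum_nonneg)
  ultimately show ?thesis by simp
qed

lemma nrm_unit: assumes "w \<in> carrier_vec n" "w \<noteq> 0\<^sub>v n" shows "nrm w \<bullet>c nrm w = 1"
proof -
  have p: "sqn w > 0" using sqn_pos[OF assms] .
  have "nrm w \<bullet>c nrm w = complex_of_real (1 / sqrt (sqn w)) * cnj (complex_of_real (1 / sqrt (sqn w))) * complex_of_real (sqn w)"
    unfolding nrm_def by (subst cscalar_smult[OF assms(1) assms(1)]) (simp add: cscalar_self)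
  also have "\<dots> = complex_of_real ((1 / sqrt (sqn w)) * (1 / sqrt (sqn w)) * sqn w)"
    by (metis complex_cnj_complex_of_real of_real_mult)
  also have "(1 / sqrt (sqn w)) * (1 / sqrt (sqn w)) * sqn w = 1" using p
    by (simp add: field_simps)
  finally show ?thesis by simp
qed

lemma nrm_carrier[simp]: "w \<in> carrier_vec n \<Longrightarrow> nrm w \<in> carrier_vec n"
  unfolding nrm_def by simp

lemma corthogonal_nrm:
  assumes ws: "set ws \<subseteq> carrier_vec n" and o: "corthogonal ws"
  shows "corthogonal (map nrm ws)"
proof (rule corthogonalI)
  fix i j assume i: "i < length (map nrm ws)" and j: "j < length (map nrm ws)"
  hence i': "i < length ws" and j': "j < length ws" by auto
  have c: "ws ! i \<in> carrier_vec n" "ws ! j \<in> carrier_vec n" using ws i' j' by auto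
  have nz: "\<And>k. k < length ws \<Longrightarrow> ws ! k \<noteq> 0\<^sub>v n"
  proof -
    fix k assume k: "k < length ws"
    have "ws ! k \<bullet>c ws ! k \<noteq> 0" using corthogonalD[OF o k k] by simp
    thus "ws ! k \<noteq> 0\<^sub>v n" using ws k by auto
  qed
  have pi: "sqn (ws ! i) > 0" "sqn (ws ! j) > 0" using sqn_pos c nz i' j' by auto
  have "map nrm ws ! i \<bullet>c map nrm ws ! j =
    complex_of_real (1 / sqrt (sqn (ws!i))) * cnj (complex_of_real (1 / sqrt (sqn (ws!j)))) * (ws ! i \<bullet>c ws ! j)"
    using i' j' unfolding nrm_def by (simp add: cscalar_smult[OF c])
  moreover have "complex_of_real (1 / sqrt (sqn (ws!i))) * cnj (complex_of_real (1 / sqrt (sqn (ws!j)))) \<noteq> 0"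
    using pi by simp
  ultimately show "(map nrm ws ! i \<bullet>c map nrm ws ! j = 0) = (i \<noteq> j)"
    using corthogonalD[OF o i' j'] by simp
qed

lemma corthogonal_inv_adj:
  assumes ws: "set ws \<subseteq> carrier_vec n" "length ws = n" and unit: "\<And>w. w \<in> set ws \<Longrightarrow> w \<bullet>c w = 1"
  shows "corthogonal_inv (mat_of_cols n ws) = adj (mat_of_cols n ws)"
proof (rule eq_matI)
  fix i j assume "i < dim_row (adj (mat_of_cols n ws))" "j < dim_col (adj (mat_of_cols n ws))"
  hence i: "i < n" and j: "j < n" using ws by auto
  have wi: "ws ! i \<in> set ws" "ws ! i \<in> carrier_vec n" using ws i by auto
  have "corthogonal_inv (mat_of_cols n ws) $$ (i,j) = vec_inv (ws ! i) $ j"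
    unfolding corthogonal_inv_def using ws i j wi by (simp add: mat_of_rows_def cols_def col_mat_of_cols)
  also have "\<dots> = cnj (ws ! i $ j)" unfolding vec_inv_def using unit[OF wi(1)] wi j by simp
  also have "\<dots> = adj (mat_of_cols n ws) $$ (i,j)" using ws i j by (simp add: mat_of_cols_def)
  finally show "corthogonal_inv (mat_of_cols n ws) $$ (i,j) = adj (mat_of_cols n ws) $$ (i,j)" .
qed (use ws in \<open>auto simp: corthogonal_inv_def\<close>)

theorem unitary_schur:
  assumes "(A::complex mat) \<in> carrier_mat n n"
      and "char_poly A = (\<Prod> (e :: complex) \<leftarrow> es. [:- e, 1:])"
  shows "\<exists>B P Q. similar_mat_wit A B P Q \<and> upper_triangular B \<and> diag_mat B = es \<and> Q = adj P"
  using assms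
proof (induct es arbitrary: n A)
  case Nil
  with degree_monic_char_poly[of A n] have n0: "n = 0" by auto
  have "similar_mat_wit A A (1\<^sub>m n) (1\<^sub>m n)" using Nil by (auto intro: similar_mat_wit_refl)
  moreover have "upper_triangular A" "diag_mat A = []" using Nil n0
    by (auto simp: diag_mat_def upper_triangular_def)
  ultimately show ?case by (metis adj_one)
next
  case (Cons e es n A)
  let ?n1 = "n - 1"
  from Cons have A: "A \<in> carrier_mat n n" and dim: "dim_row A = n" by auto
  let ?cp = "char_poly A"
  from Cons(3)
  have cp: "?cp = [: -e, 1 :] * (\<Prod>e \<leftarrow> es. [:- e, 1:])" by auto
  have mon: "monic (\<Prod>e\<leftarrow> es. [:- e, 1:])" by (rule monic_prod_list, auto)
  have deg: "degree ?cp = Suc (degree (\<Prod>e\<leftarrow> es. [:- e, 1:]))" unfolding cp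
    by (subst degree_mult_eq, insert mon, auto)
  with degree_monic_char_poly[OF A] have n: "n \<noteq> 0" by auto
  define v0 where "v0 = find_eigenvector A e"
  define b where "b = basis_completion v0"
  define ws0 where "ws0 = gram_schmidt n b"
  define ws where "ws = map nrm ws0"
  define v where "v = nrm v0"
  define W where "W = mat_of_cols n ws"
  define W' where "W' = corthogonal_inv W"
  define A' where "A' = W' * A * W"
  have e: "eigenvalue A e"
    unfolding eigenvalue_root_char_poly[OF A] cp by simp
  from find_eigenvector[OF A e] have ev: "eigenvector A v0 e" unfolding v0_def .
  from this[unfolded eigenvector_def]
  have v0[simp]: "v0 \<in> carrier_vec n" and v00: "v0 \<noteq> 0\<^sub>v n" and ev0: "A *\<^sub>v v0 = e \<cdot>\<^sub>v v0"
    using A by auto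
  interpret cof_vec_space n "TYPE(complex)" .
  from basis_completion[OF v0 v00, folded b_def]
  have span_b: "span (set b) = carrier_vec n" and dist_b: "distinct b"
    and indep: "\<not> lin_dep (set b)" and b: "set b \<subseteq> carrier_vec n" and hdb: "hd b = v0"
    and len_b: "length b = n" by auto
  from hdb len_b n obtain vs where bv: "b = v0 # vs" by (cases b, auto)
  from gram_schmidt_result[OF b dist_b indep refl, folded ws0_def]
  have ws0: "set ws0 \<subseteq> carrier_vec n" "corthogonal ws0" "length ws0 = n"
    by (auto simp: len_b)
  from gram_schmidt_hd[OF v0, of vs, folded bv] have hdws0: "hd ws0 = v0" unfolding ws0_def .
  have ws: "set ws \<subseteq> carrier_vec n" "corthogonal ws" "length ws = n"
    using ws0 corthogonal_nrm[OF ws0(1,2)] unfolding ws_def by auto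
  have hdws: "hd ws = v" unfolding ws_def v_def using hdws0 ws0 n by (cases ws0, auto)
  have v: "v \<in> carrier_vec n" unfolding v_def by simp
  have vunit: "v \<bullet>c v = 1" unfolding v_def using nrm_unit[OF v0 v00] .
  have vne: "v \<noteq> 0\<^sub>v n"
  proof
    assume "v = 0\<^sub>v n" hence "v \<bullet>c v = 0" by simp
    thus False using vunit by simp
  qed
  have eigen: "A *\<^sub>v v = e \<cdot>\<^sub>v v" unfolding v_def nrm_def using A ev0
    by (simp add: mult_mat_vec smult_smult_assoc mult.commute)
  have unit: "\<And>w. w \<in> set ws \<Longrightarrow> w \<bullet>c w = 1"
  proof -
    fix w assume "w \<in> set ws"
    then obtain w0 where w0: "w0 \<in> set ws0" "w = nrm w0" unfolding ws_def by auto
    then obtain k where k: "k < length ws0" "w0 = ws0 ! k" by (metis in_set_conv_nth)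
    have "w0 \<bullet>c w0 \<noteq> 0" using corthogonalD[OF ws0(2) k(1) k(1)] k by simp
    hence "w0 \<noteq> 0\<^sub>v n" by auto
    thus "w \<bullet>c w = 1" using nrm_unit[of w0 n] w0 ws0 by auto
  qed
  have W'adj: "W' = adj W" unfolding W'_def W_def by (rule corthogonal_inv_adj[OF ws(1,3) unit])
  have orth_W: "corthogonal_mat W" using orthogonal_mat_of_cols ws unfolding W_def.
  have W: "W \<in> carrier_mat n n"
    using ws unfolding W_def using mat_of_cols_carrier(1)[of n ws] by auto
  have W': "W' \<in> carrier_mat n n" unfolding W'_def corthogonal_inv_def using W
    by (auto simp: mat_of_rows_def)
  from corthogonal_inv_result[OF orth_W]
  have W'W: "inverts_mat W' W" unfolding W'_def .
  hence WW': "inverts_mat W W'" using mat_mult_left_right_inverse[OF W' W] W' W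
    unfolding inverts_mat_def by auto
  have A': "A' \<in> carrier_mat n n" using W W' A unfolding A'_def by auto
  have A'A_wit: "similar_mat_wit A' A W' W"
    by (rule similar_mat_witI[of _ _ n], insert W W' A A' W'W WW', auto simp: A'_def
    inverts_mat_def)
  hence A'A: "similar_mat A' A" unfolding similar_mat_def by blast
  from similar_mat_wit_sym[OF A'A_wit] have simAA': "similar_mat_wit A A' W W'" by auto
  let ?f = "(\<lambda> i. if i = 0 then e else 0)"
  have col0: "col A' 0 = vec n ?f"
    unfolding A'_def W'_def W_def
    using corthogonal_col_ev_0[OF A v vne eigen n hdws ws].
  from A' n have "dim_row A' = 1 + ?n1" "dim_col A' = 1 + ?n1" by auto
  obtain A1 A2 A0 A3 where splitA': "split_block A' 1 1 = (A1,A2,A0,A3)"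
    by (cases "split_block A' 1 1", auto)
  from split_block[OF splitA' \<open>dim_row A' = 1 + ?n1\<close> \<open>dim_col A' = 1 + ?n1\<close>]
  have A2: "A2 \<in> carrier_mat 1 ?n1"
    and A3: "A3 \<in> carrier_mat ?n1 ?n1"
    and A'block: "A' = four_block_mat A1 A2 A0 A3" by auto
  have A1id: "A1 = mat 1 1 (\<lambda> _. e)"
    using splitA'[unfolded split_block_def Let_def] arg_cong[OF col0, of "\<lambda> v. v $ 0"] A' n
    by (auto simp: col_def)
  have A1: "A1 \<in> carrier_mat 1 1" unfolding A1id by auto
  {
    fix i
    assume "i < ?n1"
    with arg_cong[OF col0, of "\<lambda> v. v $ Suc i"] A'
    have "A' $$ (Suc i, 0) = 0" by auto
  } note A'0 = this
  have A0id: "A0 = 0\<^sub>m ?n1 1"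
    using splitA'[unfolded split_block_def Let_def] A'0 A' by auto
  have A0: "A0 \<in> carrier_mat ?n1 1" unfolding A0id by auto
  from cp char_poly_similar[OF A'A]
  have cp: "char_poly A' = [: -e,1 :] * (\<Prod> e \<leftarrow> es. [:- e, 1:])" by simp
  also have "char_poly A' = char_poly A1 * char_poly A3"
    unfolding A'block A0id
    by (rule char_poly_four_block_zeros_col[OF A1 A2 A3])
  also have "char_poly A1 = [: -e,1 :]"
    by (simp add: A1id char_poly_defs det_def sign_def)
  finally have cp: "char_poly A3 = (\<Prod> e \<leftarrow> es. [:- e, 1:])"
    by (metis mult_cancel_left pCons_eq_0_iff zero_neq_one)
  from Cons(1)[OF A3 cp] obtain B P' Q' where
    simIH: "similar_mat_wit A3 B P' Q'" and ut: "upper_triangular B" and diag: "diag_mat B = es"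
    and QP': "Q' = adj P'" by blast
  from similar_mat_witD2[OF A3 simIH]
  have B: "B \<in> carrier_mat ?n1 ?n1" and P': "P' \<in> carrier_mat ?n1 ?n1" and Q': "Q' \<in> carrier_mat ?n1 ?n1"
    and PQ': "P' * Q' = 1\<^sub>m ?n1" by auto
  let ?P' = "four_block_mat (1\<^sub>m 1) (0\<^sub>m 1 ?n1) (0\<^sub>m ?n1 1) P'"
  let ?Q' = "four_block_mat (1\<^sub>m 1) (0\<^sub>m 1 ?n1) (0\<^sub>m ?n1 1) Q'"
  define C where "C = four_block_mat A1 (A2 * P') A0 B"
  have A0_eq: "A0 = P' * A0 * 1\<^sub>m 1" unfolding A0id using P' by auto
  have simA'C: "similar_mat_wit A' C ?P' ?Q'" unfolding A'block C_def
    by (rule similar_mat_wit_four_block[OF similar_mat_wit_refl[OF A1] simIH _ A0_eq A1 A3 A0],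
    insert PQ' A2 P' Q', auto)
  have ut1: "upper_triangular A1" unfolding A1id by auto
  have utC: "upper_triangular C" unfolding C_def A0id
    by (intro upper_triangular_four_block[OF _ B ut1 ut], auto simp: A1id)
  from A1id have diagA1: "diag_mat A1 = [e]" unfolding diag_mat_def by auto
  from diag_four_block_mat[OF A1 B] have diagC: "diag_mat C = e # es" unfolding diag diagA1 C_def by simp
  have P'c: "?P' \<in> carrier_mat n n" using P' n by auto
  have adjP: "adj (W * ?P') = ?Q' * W'"
  proof -
    have "adj (W * ?P') = adj ?P' * adj W" by (rule adj_mult[OF W P'c])
    also have "adj ?P' = ?Q'" unfolding QP'
      by (subst adj_four_block[of _ 1 _ ?n1]) (use P' in auto)
    finally show ?thesis using W'adj by simp
  qed
  from utC similar_mat_wit_trans[OF simAA' simA'C] diagC adjP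
  show ?case by metis
qed

lemma adj_cscalar:
  assumes M: "M \<in> carrier_mat n n" and x: "x \<in> carrier_vec n" and y: "y \<in> carrier_vec n"
  shows "(M *\<^sub>v x) \<bullet>c y = x \<bullet>c (adj M *\<^sub>v y)"
proof -
  have "(M *\<^sub>v x) \<bullet>c y = (\<Sum>i<n. (\<Sum>k<n. M $$ (i,k) * x $ k) * cnj (y $ i))"
    using M x y by (simp add: scalar_prod_def lessThan_atLeast0 mult_mat_vec_def row_def)
  also have "\<dots> = (\<Sum>i<n. \<Sum>k<n. x $ k * (M $$ (i,k) * cnj (y $ i)))"
    by (simp add: sum_distrib_right sum_distrib_left mult_ac)
  also have "\<dots> = (\<Sum>k<n. \<Sum>i<n. x $ k * (M $$ (i,k) * cnj (y $ i)))"
    by (rule sum.swap)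
  also have "\<dots> = (\<Sum>k<n. x $ k * cnj (\<Sum>i<n. cnj (M $$ (i,k)) * y $ i))"
    by (simp add: sum_distrib_left)
  also have "\<dots> = x \<bullet>c (adj M *\<^sub>v y)"
    using M x y by (simp add: scalar_prod_def lessThan_atLeast0 mult_mat_vec_def row_def)
  finally show ?thesis .
qed

lemma smult_one_mat_vec: assumes w: "w \<in> carrier_vec n" shows "(c \<cdot>\<^sub>m 1\<^sub>m n) *\<^sub>v w = (c::complex) \<cdot>\<^sub>v w"
proof -
  have "c \<cdot>\<^sub>v (1\<^sub>m n *\<^sub>v w) = (c \<cdot>\<^sub>m 1\<^sub>m n) *\<^sub>v w" using w by auto
  thus ?thesis using w by simp
qed

lemma cinner_eq: "dim_vec w = dim_vec v \<Longrightarrow> cinner v w = v \<bullet>c w"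
  unfolding cinner_def scalar_prod_def by (simp add: lessThan_atLeast0)

lemma norm2_sqn: "(norm2 v)\<^sup>2 = sqn v"
  unfolding norm2_def sqn_def by (simp add: sum_nonneg)

theorem theorem4p2:
  fixes n m :: nat and A :: "complex mat"
    and v r :: "nat \<Rightarrow> complex vec" and lam :: "nat \<Rightarrow> real"
  assumes "0 < m" and "m \<le> n"
    and "A \<in> carrier_mat n n" and "hermitian_mat A"
    and "\<And>j. j < m \<Longrightarrow> v j \<in> carrier_vec n"
    and "\<And>i j. i < m \<Longrightarrow> j < m \<Longrightarrow> cinner (v i) (v j) = (if i = j then 1 else 0)"
    and "\<And>j. j < m \<Longrightarrow> (A - complex_of_real (lam j) \<cdot>\<^sub>m 1\<^sub>m n) *\<^sub>v v j = r j"
  shows "\<exists>\<alpha> :: nat \<Rightarrow> complex. \<exists>\<sigma> :: nat \<Rightarrow> nat.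
           char_poly A = (\<Prod>k<n. [:- \<alpha> k, 1:]) \<and>
           inj_on \<sigma> {..<m} \<and> \<sigma> ` {..<m} \<subseteq> {..<n} \<and>
           (\<forall>j<m. cmod (complex_of_real (lam j) - \<alpha> (\<sigma> j))
                     \<le> 2 * real m * (MAX i\<in>{..<m}. norm2 (r i)))"
proof -
  note m0 = assms(1) and A = assms(3) and herm = assms(4) and vc = assms(5)
    and orthv = assms(6) and rdef = assms(7)
  obtain es where es: "char_poly A = (\<Prod> a \<leftarrow> es. [:- a, 1:])" "length es = n"
    using char_poly_factorized[OF A] by blast
  obtain B P Q where sim: "similar_mat_wit A B P Q" and ut: "upper_triangular B"
    and dg: "diag_mat B = es" and QP: "Q = adj P"
    using unitary_schur[OF A es(1)] by blast
  from similar_mat_witD2[OF A sim] have B: "B \<in> carrier_mat n n" and P: "P \<in> carrier_mat n n"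
    and Q: "Q \<in> carrier_mat n n" and PQ: "P * Q = 1\<^sub>m n" and QPI: "Q * P = 1\<^sub>m n"
    and AB: "A = P * B * Q" by auto
  have QA: "Q * A = B * Q"
  proof -
    have e1: "Q * (P * B) = B" using P B Q QPI by (simp add: assoc_mult_mat[of Q n n P n B n, symmetric])
    have "Q * A = Q * (P * B) * Q" using AB P B Q by (simp add: assoc_mult_mat[of Q n n "P * B" n Q n])
    thus ?thesis using e1 by simp
  qed
  have BQAP: "B = Q * A * P"
  proof -
    have "Q * A * P = B * Q * P" using QA by simp
    also have "\<dots> = B * (Q * P)" using P B Q by (simp add: assoc_mult_mat)
    finally show ?thesis using QPI B by simp
  qed
  have adjB: "adj B = B"
  proof -
    have "adj B = adj P * adj (Q * A)" unfolding BQAP using Q A P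
      by (subst adj_mult[of _ n n]) auto
    also have "adj (Q * A) = adj A * adj Q" using Q A by (rule adj_mult)
    also have "adj A = A" using herm by (rule hermitian_adj)
    finally show ?thesis unfolding BQAP QP using P A by (simp add: assoc_mult_mat[of "adj P" n n A n P n])
  qed
  have Bdiag: "\<And>i j. i < n \<Longrightarrow> j < n \<Longrightarrow> i \<noteq> j \<Longrightarrow> B $$ (i,j) = 0"
  proof -
    fix i j assume ij: "i < n" "j < n" "i \<noteq> j"
    show "B $$ (i,j) = 0"
    proof (cases "j < i")
      case True thus ?thesis using ut ij B unfolding upper_triangular_def by auto
    next
      case False
      hence "B $$ (j,i) = 0" using ut ij B unfolding upper_triangular_def by auto
      moreover have "B $$ (i,j) = cnj (B $$ (j,i))"
        using arg_cong[OF adjB, of "\<lambda>M. M $$ (i,j)"] B ij by simp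
      ultimately show ?thesis by simp
    qed
  qed
  define \<alpha> where "\<alpha> = (\<lambda>k. B $$ (k,k))"
  have esB: "es = map \<alpha> [0..<n]" using dg[symmetric] B unfolding diag_mat_def \<alpha>_def by auto
  have cpA: "char_poly A = (\<Prod>k<n. [:- \<alpha> k, 1:])"
  proof -
    have "char_poly A = prod_list (map (\<lambda>k. [:- \<alpha> k, 1:]) [0..<n])" using es(1) esB by (simp add: comp_def)
    also have "\<dots> = (\<Prod>k\<in>set [0..<n]. [:- \<alpha> k, 1:])" by (rule prod.distinct_set_conv_list[symmetric]) simp
    also have "set [0..<n] = {..<n}" by auto
    finally show ?thesis .
  qed
  have adjQQ: "adj Q * Q = 1\<^sub>m n" using PQ unfolding QP by simp
  have Qiso: "\<And>x y. x \<in> carrier_vec n \<Longrightarrow> y \<in> carrier_vec n \<Longrightarrow> (Q *\<^sub>v x) \<bullet>c (Q *\<^sub>v y) = x \<bullet>c y"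
  proof -
    fix x y :: "complex vec" assume x: "x \<in> carrier_vec n" and y: "y \<in> carrier_vec n"
    have "(Q *\<^sub>v x) \<bullet>c (Q *\<^sub>v y) = x \<bullet>c (adj Q *\<^sub>v (Q *\<^sub>v y))"
      using adj_cscalar[OF Q x] Q y by simp
    also have "adj Q *\<^sub>v (Q *\<^sub>v y) = y" using Q y adjQQ
      by (metis adj_carrier assoc_mult_mat_vec one_mult_mat_vec)
    finally show "(Q *\<^sub>v x) \<bullet>c (Q *\<^sub>v y) = x \<bullet>c y" .
  qed
  define c where "c = (\<lambda>j k. (Q *\<^sub>v v j) $ k)"
  define \<epsilon> where "\<epsilon> = (MAX i\<in>{..<m}. norm2 (r i))"
  have rc: "\<And>j. j < m \<Longrightarrow> r j \<in> carrier_vec n" using rdef vc A by (metis mult_mat_vec_carrier minus_carrier_mat one_carrier_mat smult_carrier_mat)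
  have epsj: "\<And>j. j < m \<Longrightarrow> norm2 (r j) \<le> \<epsilon>" unfolding \<epsilon>_def by (intro Max_ge) auto
  have e0: "0 \<le> \<epsilon>" using epsj[OF m0] unfolding norm2_def by (meson order_trans real_sqrt_ge_zero sum_nonneg zero_le_power2)
  have orth: "\<And>i j. i<m \<Longrightarrow> j<m \<Longrightarrow> (\<Sum>k<n. c i k * cnj (c j k)) = (if i = j then 1 else 0)"
  proof -
    fix i j assume ij: "i < m" "j < m"
    have "(\<Sum>k<n. c i k * cnj (c j k)) = (Q *\<^sub>v v i) \<bullet>c (Q *\<^sub>v v j)"
      unfolding c_def scalar_prod_def using Q by (simp add: lessThan_atLeast0)
    also have "\<dots> = v i \<bullet>c v j" using Qiso vc ij by auto
    also have "\<dots> = cinner (v i) (v j)" using vc[OF ij(1)] vc[OF ij(2)] by (intro cinner_eq[symmetric]) simp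
    finally show "(\<Sum>k<n. c i k * cnj (c j k)) = (if i = j then 1 else 0)" using orthv ij by simp
  qed
  have res: "\<And>j. j<m \<Longrightarrow> (\<Sum>k<n. (cmod (\<alpha> k - complex_of_real (lam j)))\<^sup>2 * (cmod (c j k))\<^sup>2) \<le> \<epsilon>\<^sup>2"
  proof -
    fix j assume j: "j < m"
    have vj: "v j \<in> carrier_vec n" using vc j .
    have Qr: "Q *\<^sub>v r j = B *\<^sub>v (Q *\<^sub>v v j) - complex_of_real (lam j) \<cdot>\<^sub>v (Q *\<^sub>v v j)"
    proof -
      have "Q *\<^sub>v r j = Q *\<^sub>v (A *\<^sub>v v j - complex_of_real (lam j) \<cdot>\<^sub>v v j)"
        using rdef[OF j] A vj by (simp add: minus_mult_distrib_mat_vec smult_one_mat_vec)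
      also have "\<dots> = Q *\<^sub>v (A *\<^sub>v v j) - complex_of_real (lam j) \<cdot>\<^sub>v (Q *\<^sub>v v j)"
        using Q A vj by (simp add: mult_minus_distrib_mat_vec mult_mat_vec)
      also have "Q *\<^sub>v (A *\<^sub>v v j) = B *\<^sub>v (Q *\<^sub>v v j)"
        using QA Q A B vj by (metis assoc_mult_mat_vec)
      finally show ?thesis .
    qed
    have Qrk: "\<And>k. k < n \<Longrightarrow> (Q *\<^sub>v r j) $ k = (\<alpha> k - complex_of_real (lam j)) * c j k"
    proof -
      fix k assume k: "k < n"
      have "(B *\<^sub>v (Q *\<^sub>v v j)) $ k = (\<Sum>l\<in>{0..<n}. B $$ (k,l) * (Q *\<^sub>v v j) $ l)"
        using B Q k by (simp add: mult_mat_vec_def scalar_prod_def row_def)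
      also have "\<dots> = (\<Sum>l\<in>{0..<n}. if l = k then B $$ (k,k) * (Q *\<^sub>v v j) $ k else 0)"
        by (rule sum.cong) (use k Bdiag in auto)
      also have "\<dots> = B $$ (k,k) * (Q *\<^sub>v v j) $ k" using k by simp
      finally show "(Q *\<^sub>v r j) $ k = (\<alpha> k - complex_of_real (lam j)) * c j k"
        unfolding Qr c_def \<alpha>_def using B Q k by (simp add: algebra_simps)
    qed
    have s1: "sqn (Q *\<^sub>v r j) = (\<Sum>k<n. (cmod ((Q *\<^sub>v r j) $ k))\<^sup>2)" unfolding sqn_def using Q by simp
    have "(\<Sum>k<n. (cmod (\<alpha> k - complex_of_real (lam j)))\<^sup>2 * (cmod (c j k))\<^sup>2) = sqn (Q *\<^sub>v r j)"
      unfolding s1 by (rule sum.cong) (auto simp: Qrk norm_mult power_mult_distrib)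
    also have "\<dots> = sqn (r j)"
    proof -
      have "complex_of_real (sqn (Q *\<^sub>v r j)) = complex_of_real (sqn (r j))"
        unfolding cscalar_self[symmetric] using Qiso rc j by auto
      thus ?thesis by simp
    qed
    also have "\<dots> = (norm2 (r j))\<^sup>2" by (simp add: norm2_sqn)
    also have "\<dots> \<le> \<epsilon>\<^sup>2"
    proof -
      have "0 \<le> norm2 (r j)" unfolding norm2_def by (intro real_sqrt_ge_zero sum_nonneg) simp
      thus ?thesis using power_mono[OF epsj[OF j], of 2] by simp
    qed
    finally show "(\<Sum>k<n. (cmod (\<alpha> k - complex_of_real (lam j)))\<^sup>2 * (cmod (c j k))\<^sup>2) \<le> \<epsilon>\<^sup>2" .
  qed
  obtain \<sigma> where \<sigma>: "inj_on \<sigma> {..<m}" "\<sigma> ` {..<m} \<subseteq> {..<n}"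
    "\<forall>j<m. cmod (complex_of_real (lam j) - \<alpha> (\<sigma> j)) \<le> 2 * real m * \<epsilon>"
    using approx_match[OF m0 e0 orth res] by blast
  show ?thesis unfolding \<epsilon>_def[symmetric]
    by (rule exI[of _ \<alpha>], rule exI[of _ \<sigma>]) (use cpA \<sigma> in blast)
qed

end
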